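(* Let $\mu$ be a positive Borel measure on $(0,\infty)$ such that $\mu((0,1))=0$ and $\sup_{n\in\mathbb{N}}\int_{1}^{\infty}t^{-(n+1)}\,d\mu(t)<\infty$, and set $\mu_n=\int_{1}^{\infty}\frac{1}{t^{n+1}}\,d\mu(t)$ for $n\in\mathbb{N}$. Then for every $p\in[1,\infty]$ and $\alpha>0$, the sequence $(\mu_n)$ is a coefficient multiplier of $F^p_\alpha$: if $f(z)=\sum_{n\ge0}a_nz^n\in F^p_\alpha$, then $\sum_{n\geq 0}\mu_n a_n z^n\in F^p_\alpha$.
   Context: $\mathbb{N}=\{0,1,2,\dots\}$. For $1\le p<\infty$ and $\alpha>0$, the Fock space $F^p_\alpha$ is the space of entire functions $f$ with $\|f\|_{p,\alpha}^p=\frac{\alpha p}{2\pi}\int_{\mathbb{C}}|f(z)e^{-\frac{\alpha}{2}|z|^2}|^p\,dA(z)<\infty$, where $dA$ is Lebesgue area measure; $F^\infty_\alpha$ is the space of entire functions $f$ with $\sup_{z\in\mathbb{C}}|f(z)|e^{-\frac{\alpha}{2}|z|^2}<\infty$. *)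

theory Defs
  imports "HOL-Analysis.Analysis"
begin

text \<open>Fock space F^p_alpha for p in [1,infinity] (p as an extended nonnegative real).
  The normalising constant alpha p/(2 pi) does not affect membership.\<close>
definition Fock_space :: "ennreal \<Rightarrow> real \<Rightarrow> (complex \<Rightarrow> complex) set" where
  "Fock_space p \<alpha> = {f. f holomorphic_on UNIV \<and>
     (if p = \<infinity> then (\<exists>C. \<forall>z. norm (f z) * exp (- (\<alpha> / 2) * (norm z)\<^sup>2) \<le> C)
      else (\<integral>\<^sup>+ z. ennreal ((norm (f z) * exp (- (\<alpha> / 2) * (norm z)\<^sup>2)) powr enn2real p) \<partial>lborel) < \<infinity>)}"

definition moment_seq :: "real measure \<Rightarrow> nat \<Rightarrow> real" where
  "moment_seq \<mu> n = enn2real (\<integral>\<^sup>+ t. ennreal (t powr (- real (n + 1))) * indicator {1..} t \<partial>\<mu>)"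

end

theory Submission
  imports Defs "HOL-Complex_Analysis.Complex_Analysis" "HOL-Probability.Probability"
begin

lemma lborel_complex_affine:
  fixes \<phi> :: "complex \<Rightarrow> ennreal" and c :: real and t :: complex
  assumes c: "c \<noteq> 0" and [measurable]: "\<phi> \<in> borel_measurable borel"
  shows "integral\<^sup>N lborel \<phi> = ennreal (c^2) * (\<integral>\<^sup>+ x. \<phi> (t + c *\<^sub>R x) \<partial>lborel)"
proof -
  have "integral\<^sup>N lborel \<phi> = integral\<^sup>N (density (distr lborel borel (\<lambda>x. t + c *\<^sub>R x)) (\<lambda>_. ennreal (\<bar>c\<bar> ^ DIM(complex)))) \<phi>"
    using lborel_affine[OF c, of t] by simp
  also have "\<dots> = \<integral>\<^sup>+ x. ennreal (\<bar>c\<bar> ^ DIM(complex)) * \<phi> x \<partial>(distr lborel borel (\<lambda>x. t + c *\<^sub>R x))"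
    by (simp add: nn_integral_density)
  also have "\<dots> = \<integral>\<^sup>+ x. ennreal (\<bar>c\<bar> ^ DIM(complex)) * \<phi> (t + c *\<^sub>R x) \<partial>lborel"
    by (simp add: nn_integral_distr)
  also have "\<dots> = ennreal (c^2) * (\<integral>\<^sup>+ x. \<phi> (t + c *\<^sub>R x) \<partial>lborel)"
    by (simp add: nn_integral_cmult)
  finally show ?thesis .
qed

lemma circle_step:
  fixes h :: "complex \<Rightarrow> complex" and W :: complex
  assumes h: "h holomorphic_on UNIV" and W: "norm W \<le> 1/2"
  shows "ennreal (norm (h 0)) \<le> 2 * (\<integral>\<^sup>+ t. ennreal (norm (h (- W + exp (2 * of_real pi * \<i> * of_real t)))) * indicator {0..1} t \<partial>lborel)"
proof -
  let ?g = "circlepath (- W) 1"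
  have "((\<lambda>u. h u / (u - 0)) has_contour_integral (2 * of_real pi * \<i> * h 0)) ?g"
    by (rule Cauchy_integral_circlepath_simple) (use h W in \<open>auto intro: holomorphic_on_subset\<close>)
  then have HI: "((\<lambda>x. h (?g x) / (?g x) * vector_derivative ?g (at x)) has_integral (2 * of_real pi * \<i> * h 0)) {0..1}"
    by (simp add: has_contour_integral)
  have vd: "vector_derivative ?g (at x) = complex_of_real (2 * pi) * \<i> * exp (2 * complex_of_real pi * \<i> * complex_of_real x)" for x
    by (rule vector_derivative_at) (use has_vector_derivative_circlepath[of "-W" 1 x UNIV] in simp)
  have gx: "?g x = - W + exp (2 * of_real pi * \<i> * of_real x)" for x
    by (simp add: circlepath)
  have ne: "norm (exp (2 * of_real pi * \<i> * of_real x)) = 1" for x :: real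
    by (simp add: norm_exp_eq_Re)
  have gbig: "norm (?g x) \<ge> 1/2" for x
  proof -
    have "1 \<le> norm (?g x) + norm W"
      using norm_triangle_ineq[of "?g x" W] ne[of x] by (simp add: gx)
    then show ?thesis using W by simp
  qed
  define G where "G x = 4 * pi * norm (h (- W + exp (2 * of_real pi * \<i> * of_real x)))" for x
  have contG: "continuous_on {0..1} G"
    unfolding G_def
    by (intro continuous_intros continuous_on_compose2[OF holomorphic_on_imp_continuous_on[OF h]]) auto
  have bound: "norm (h (?g x) / (?g x) * vector_derivative ?g (at x)) \<le> G x" for x
  proof -
    have "norm (h (?g x) / (?g x) * vector_derivative ?g (at x)) = norm (h (?g x)) / norm (?g x) * (2 * pi)"
      by (simp add: vd norm_mult norm_divide ne)
    also have "\<dots> \<le> norm (h (?g x)) / (1/2) * (2 * pi)"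
      using gbig[of x] by (intro mult_right_mono divide_left_mono) auto
    finally show ?thesis by (simp add: G_def gx mult_ac)
  qed
  have "norm (2 * of_real pi * \<i> * h 0) \<le> integral {0..1} G"
    using integral_norm_bound_integral[OF has_integral_integrable[OF HI] integrable_continuous_real[OF contG] bound]
    using HI by (simp add: integral_unique)
  then have "2 * pi * norm (h 0) \<le> integral {0..1} G"
    by (simp add: norm_mult)
  moreover have "integral {0..1} G = 4 * pi * integral {0..1} (\<lambda>x. norm (h (- W + exp (2 * of_real pi * \<i> * of_real x))))"
    unfolding G_def by simp
  ultimately have le: "norm (h 0) \<le> 2 * integral {0..1} (\<lambda>x. norm (h (- W + exp (2 * of_real pi * \<i> * of_real x))))"
    by (simp add: mult_le_cancel_left_pos)
  have cont2: "continuous_on {0..1} (\<lambda>x. norm (h (- W + exp (2 * of_real pi * \<i> * of_real x))))"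
    by (intro continuous_intros continuous_on_compose2[OF holomorphic_on_imp_continuous_on[OF h]]) auto
  have "(\<integral>\<^sup>+ t. ennreal (norm (h (- W + exp (2 * of_real pi * \<i> * of_real t)))) * indicator {0..1} t \<partial>lborel)
     = ennreal (integral {0..1} (\<lambda>x. norm (h (- W + exp (2 * of_real pi * \<i> * of_real x)))))"
    using integrable_integral[OF integrable_continuous_real[OF cont2]]
    by (intro nn_integral_has_integral_lebesgue') auto
  moreover have "ennreal (norm (h 0)) \<le> ennreal (2 * integral {0..1} (\<lambda>x. norm (h (- W + exp (2 * of_real pi * \<i> * of_real x)))))"
    using le by (rule ennreal_leI)
  ultimately show ?thesis
    by (simp add: ennreal_mult')
qed

lemma mean_bound:
  fixes h :: "complex \<Rightarrow> complex"
  assumes h: "h holomorphic_on UNIV"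
  shows "ennreal (norm (h 0)) \<le> 8 * (\<integral>\<^sup>+ V. ennreal (norm (h V)) * indicator (ball 0 2) V \<partial>lborel)"
proof -
  define S0 where "S0 = cbox (Complex (-1/4) (-1/4)) (Complex (1/4) (1/4))"
  define e where "e t = exp (2 * of_real pi * \<i> * of_real t)" for t :: real
  define I where "I = (\<integral>\<^sup>+ V. ennreal (norm (h V)) * indicator (ball 0 2) V \<partial>lborel)"
  have hm[measurable]: "h \<in> borel_measurable borel"
    using borel_measurable_continuous_onI holomorphic_on_imp_continuous_on[OF h] by blast
  have em[measurable]: "e \<in> borel_measurable borel"
    unfolding e_def by (intro borel_measurable_continuous_onI continuous_intros)
  have [measurable]: "ball (0::complex) 2 \<in> sets borel" "S0 \<in> sets borel"
    by (auto simp: S0_def)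
  have S0norm: "norm W \<le> 1/2" if "W \<in> S0" for W
  proof -
    from that have "\<bar>Re W\<bar> \<le> 1/4" "\<bar>Im W\<bar> \<le> 1/4"
      by (auto simp: S0_def mem_box Basis_complex_def)
    then show ?thesis using cmod_le[of W] by linarith
  qed
  have mS0: "emeasure lborel S0 = ennreal (1/4)"
    unfolding S0_def by (subst emeasure_lborel_cbox) (auto simp: Basis_complex_def)
  have step: "ennreal (norm (h 0)) \<le> 2 * (\<integral>\<^sup>+ t. ennreal (norm (h (e t - W))) * indicator {0..1} t \<partial>lborel)"
    if "W \<in> S0" for W
    using circle_step[OF h S0norm[OF that]] by (simp add: e_def add.commute)
  have inner: "(\<integral>\<^sup>+ W. ennreal (norm (h (e t - W))) * indicator S0 W \<partial>lborel) \<le> I" for t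
  proof -
    have "(\<integral>\<^sup>+ W. ennreal (norm (h (e t - W))) * indicator S0 W \<partial>lborel)
        \<le> (\<integral>\<^sup>+ W. ennreal (norm (h (e t - W))) * indicator (ball 0 2) (e t - W) \<partial>lborel)"
    proof (intro nn_integral_mono)
      fix W :: complex
      have "W \<in> S0 \<Longrightarrow> e t - W \<in> ball 0 2"
        using S0norm[of W] norm_triangle_ineq4[of "e t" W] by (auto simp: e_def norm_exp_eq_Re)
      then show "ennreal (norm (h (e t - W))) * indicator S0 W \<le> ennreal (norm (h (e t - W))) * indicator (ball 0 2) (e t - W)"
        by (auto split: split_indicator)
    qed
    also have "\<dots> = I"
    proof -
      have m: "(\<lambda>V. ennreal (norm (h V)) * indicator (ball 0 2) V) \<in> borel_measurable borel"
        by measurable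
      show ?thesis
        unfolding I_def using lborel_complex_affine[of "-1" _ "e t", OF _ m] by simp
    qed
    finally show ?thesis .
  qed
  have "ennreal (norm (h 0)) * ennreal (1/4) = (\<integral>\<^sup>+ W. ennreal (norm (h 0)) * indicator S0 W \<partial>lborel)"
    by (simp add: nn_integral_cmult_indicator mS0)
  also have "\<dots> \<le> (\<integral>\<^sup>+ W. (2 * (\<integral>\<^sup>+ t. ennreal (norm (h (e t - W))) * indicator {0..1} t \<partial>lborel)) * indicator S0 W \<partial>lborel)"
    by (intro nn_integral_mono) (auto split: split_indicator simp: step)
  also have "\<dots> = (\<integral>\<^sup>+ W. 2 * (\<integral>\<^sup>+ t. ennreal (norm (h (e t - W))) * indicator {0..1} t * indicator S0 W \<partial>lborel) \<partial>lborel)"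
  proof (intro nn_integral_cong)
    fix W :: complex
    show "2 * (\<integral>\<^sup>+ t. ennreal (norm (h (e t - W))) * indicator {0..1} t \<partial>lborel) * indicator S0 W =
      2 * (\<integral>\<^sup>+ t. ennreal (norm (h (e t - W))) * indicator {0..1} t * indicator S0 W \<partial>lborel)"
      by (subst nn_integral_multc) (auto simp: mult.assoc)
  qed
  also have "\<dots> = 2 * (\<integral>\<^sup>+ W. (\<integral>\<^sup>+ t. ennreal (norm (h (e t - W))) * indicator {0..1} t * indicator S0 W \<partial>lborel) \<partial>lborel)"
    by (rule nn_integral_cmult) measurable
  also have "\<dots> = 2 * (\<integral>\<^sup>+ t. (\<integral>\<^sup>+ W. ennreal (norm (h (e t - W))) * indicator {0..1} t * indicator S0 W \<partial>lborel) \<partial>lborel)"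
    by (subst lborel_pair.Fubini') (auto simp: S0_def)
  also have "\<dots> = 2 * (\<integral>\<^sup>+ t. indicator {0..1} t * (\<integral>\<^sup>+ W. ennreal (norm (h (e t - W))) * indicator S0 W \<partial>lborel) \<partial>lborel)"
    by (subst nn_integral_cmult[symmetric]) (auto simp: mult_ac S0_def)
  also have "\<dots> \<le> 2 * (\<integral>\<^sup>+ t. indicator {0..1} (t::real) * I \<partial>lborel)"
  proof -
    have "(\<integral>\<^sup>+ t. indicator {0..1} t * (\<integral>\<^sup>+ W. ennreal (norm (h (e t - W))) * indicator S0 W \<partial>lborel) \<partial>lborel)
       \<le> (\<integral>\<^sup>+ t. indicator {0..1} (t::real) * I \<partial>lborel)"
    proof (rule nn_integral_mono)
      fix t :: real
      show "indicator {0..1} t * (\<integral>\<^sup>+ W. ennreal (norm (h (e t - W))) * indicator S0 W \<partial>lborel) \<le> indicator {0..1} t * I"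
        using inner[of t] by (intro mult_left_mono) auto
    qed
    then show ?thesis by (rule mult_left_mono) simp
  qed
  also have "\<dots> = 2 * I"
    using nn_integral_cmult_indicator[of "{0..1::real}" lborel I] by (simp add: mult.commute)
  finally have *: "ennreal (norm (h 0)) * ennreal (1/4) \<le> 2 * I" .
  have "ennreal (norm (h 0)) = ennreal (norm (h 0)) * ennreal (1/4) * 4"
    by (simp add: mult.assoc ennreal_mult''[symmetric] flip: ennreal_numeral)
  also have "\<dots> \<le> 2 * I * 4"
    by (intro mult_right_mono *) auto
  finally show ?thesis by (simp add: I_def mult_ac)
qed

lemma le_one_plus_powr:
  fixes x q :: real
  assumes "0 \<le> x" "1 \<le> q"
  shows "x \<le> 1 + x powr q"
proof (cases "x \<le> 1")
  case True
  then show ?thesis using assms by (smt (verit) powr_ge_zero)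
next
  case False
  then have "x powr 1 \<le> x powr q" using assms by (intro powr_mono) auto
  then show ?thesis using assms by simp
qed

lemma powr_weight:
  fixes x q c :: real
  assumes "0 \<le> x"
  shows "x powr q = (x * exp (- c)) powr q * exp (q * c)"
proof (cases "x = 0")
  case True then show ?thesis by simp
next
  case False
  then have "x > 0" using assms by simp
  then show ?thesis
    by (simp add: powr_def ln_mult exp_add[symmetric] algebra_simps)
qed

lemma growth:
  fixes f :: "complex \<Rightarrow> complex" and q \<alpha> :: real
  assumes f: "f holomorphic_on UNIV" and q: "1 \<le> q" and alpha: "0 < \<alpha>"
    and N: "(\<integral>\<^sup>+ z. ennreal ((norm (f z) * exp (- (\<alpha> / 2) * (norm z)\<^sup>2)) powr q) \<partial>lborel) < \<infinity>"
  shows "\<exists>C. \<forall>z. norm (f z) \<le> C * exp (q * \<alpha> * (norm z)\<^sup>2)"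
proof -
  define NI where "NI = (\<integral>\<^sup>+ z. ennreal ((norm (f z) * exp (- (\<alpha> / 2) * (norm z)\<^sup>2)) powr q) \<partial>lborel)"
  define Nr where "Nr = enn2real NI"
  have NI: "NI = ennreal Nr" "0 \<le> Nr"
    using N unfolding NI_def Nr_def by (auto simp: less_top[symmetric] ennreal_enn2real_if)
  have fm[measurable]: "f \<in> borel_measurable borel"
    using borel_measurable_continuous_onI holomorphic_on_imp_continuous_on[OF f] by blast
  have [measurable]: "ball (0::complex) 2 \<in> sets borel" by simp
  have m2: "emeasure lborel (ball (0::complex) 2) \<le> 16"
  proof -
    have "ball (0::complex) 2 \<subseteq> cbox (Complex (-2) (-2)) (Complex 2 2)"
    proof
      fix V :: complex assume "V \<in> ball 0 2"
      then have "norm V < 2" by simp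
      then have "\<bar>Re V\<bar> \<le> 2" "\<bar>Im V\<bar> \<le> 2" using abs_Re_le_cmod abs_Im_le_cmod
        by (smt (verit))+
      then show "V \<in> cbox (Complex (-2) (-2)) (Complex 2 2)"
        by (auto simp: mem_box Basis_complex_def)
    qed
    then have "emeasure lborel (ball (0::complex) 2) \<le> emeasure lborel (cbox (Complex (-2) (-2)) (Complex 2 2))"
      by (intro emeasure_mono) auto
    also have "\<dots> = 16"
      by (subst emeasure_lborel_cbox) (auto simp: Basis_complex_def)
    finally show ?thesis .
  qed
  define C where "C = 128 + 8 * Nr * exp (4 * q * \<alpha>)"
  have "norm (f z) \<le> C * exp (q * \<alpha> * (norm z)\<^sup>2)" for z
  proof -
    define E where "E = exp (q * (\<alpha> / 2) * (norm z + 2)\<^sup>2)"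
    have hol: "(\<lambda>V. f (z + V)) holomorphic_on UNIV"
      by (rule holomorphic_on_compose_gen[of _ UNIV f, unfolded o_def]) (auto intro: holomorphic_intros f)
    have pt: "ennreal (norm (f (z + V))) * indicator (ball 0 2) V
        \<le> indicator (ball 0 2) V + ennreal E * ennreal ((norm (f (z + V)) * exp (- (\<alpha> / 2) * (norm (z + V))\<^sup>2)) powr q)" for V
    proof (cases "V \<in> ball 0 2")
      case True
      let ?x = "norm (f (z + V))"
      have "norm (z + V) \<le> norm z + 2" using True norm_triangle_ineq[of z V] by simp
      then have "(norm (z + V))\<^sup>2 \<le> (norm z + 2)\<^sup>2" by (intro power_mono) auto
      then have eb: "exp (q * ((\<alpha> / 2) * (norm (z + V))\<^sup>2)) \<le> E"
      proof -
        have "(\<alpha> / 2) * (norm (z + V))\<^sup>2 \<le> (\<alpha> / 2) * (norm z + 2)\<^sup>2"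
          using alpha \<open>(norm (z + V))\<^sup>2 \<le> (norm z + 2)\<^sup>2\<close> by (intro mult_left_mono) auto
        then have "q * ((\<alpha> / 2) * (norm (z + V))\<^sup>2) \<le> q * ((\<alpha> / 2) * (norm z + 2)\<^sup>2)"
          by (rule mult_left_mono) (use q in linarith)
        then show ?thesis unfolding E_def by (simp add: mult.assoc)
      qed
      have "?x \<le> 1 + ?x powr q" by (rule le_one_plus_powr) (use q in auto)
      also have "?x powr q = (?x * exp (- ((\<alpha> / 2) * (norm (z + V))\<^sup>2))) powr q * exp (q * ((\<alpha> / 2) * (norm (z + V))\<^sup>2))"
        by (rule powr_weight) simp
      also have "\<dots> \<le> (?x * exp (- ((\<alpha> / 2) * (norm (z + V))\<^sup>2))) powr q * E"
        by (intro mult_left_mono eb) auto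
      finally have "?x \<le> 1 + E * (?x * exp (- (\<alpha> / 2) * (norm (z + V))\<^sup>2)) powr q"
        by (simp add: mult_ac)
      then have "ennreal ?x \<le> ennreal (1 + E * (?x * exp (- (\<alpha> / 2) * (norm (z + V))\<^sup>2)) powr q)"
        by (rule ennreal_leI)
      also have "\<dots> = 1 + ennreal E * ennreal ((?x * exp (- (\<alpha> / 2) * (norm (z + V))\<^sup>2)) powr q)"
        by (simp add: E_def ennreal_plus ennreal_mult)
      finally show ?thesis using True by simp
    qed simp
    have "ennreal (norm (f z)) \<le> 8 * (\<integral>\<^sup>+ V. ennreal (norm (f (z + V))) * indicator (ball 0 2) V \<partial>lborel)"
      using mean_bound[OF hol] by simp
    also have "\<dots> \<le> 8 * (\<integral>\<^sup>+ V. indicator (ball 0 2) V + ennreal E * ennreal ((norm (f (z + V)) * exp (- (\<alpha> / 2) * (norm (z + V))\<^sup>2)) powr q) \<partial>lborel)"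
      by (intro mult_left_mono nn_integral_mono pt) auto
    also have "\<dots> = 8 * (emeasure lborel (ball (0::complex) 2) + ennreal E * (\<integral>\<^sup>+ V. ennreal ((norm (f (z + V)) * exp (- (\<alpha> / 2) * (norm (z + V))\<^sup>2)) powr q) \<partial>lborel))"
      by (subst nn_integral_add) (auto simp: nn_integral_cmult)
    also have "(\<integral>\<^sup>+ V. ennreal ((norm (f (z + V)) * exp (- (\<alpha> / 2) * (norm (z + V))\<^sup>2)) powr q) \<partial>lborel) = NI"
    proof -
      have m: "(\<lambda>u. ennreal ((norm (f u) * exp (- (\<alpha> / 2) * (norm u)\<^sup>2)) powr q)) \<in> borel_measurable borel"
        by measurable
      show ?thesis
        unfolding NI_def using lborel_complex_affine[of 1 _ z, OF _ m] by simp
    qed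
    also have "8 * (emeasure lborel (ball (0::complex) 2) + ennreal E * NI) \<le> 8 * (16 + ennreal E * NI)"
      by (intro mult_left_mono add_right_mono m2) auto
    also have "\<dots> = ennreal (8 * (16 + E * Nr))"
      using NI by (simp add: E_def ennreal_plus ennreal_mult)
    finally have "norm (f z) \<le> 8 * (16 + E * Nr)"
      using NI by (subst (asm) ennreal_le_iff) (auto simp: E_def)
    also have "E \<le> exp (4 * q * \<alpha>) * exp (q * \<alpha> * (norm z)\<^sup>2)"
    proof -
      have "(norm z + 2)\<^sup>2 \<le> 2 * (norm z)\<^sup>2 + 8"
      proof -
        have "0 \<le> (norm z - 2)\<^sup>2" by simp
        then show ?thesis unfolding power2_eq_square by (simp add: algebra_simps)
      qed
      then have "q * (\<alpha> / 2) * (norm z + 2)\<^sup>2 \<le> q * (\<alpha> / 2) * (2 * (norm z)\<^sup>2 + 8)"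
        using q alpha by (intro mult_left_mono) auto
      also have "\<dots> = 4 * q * \<alpha> + q * \<alpha> * (norm z)\<^sup>2" by (simp add: algebra_simps)
      finally show ?thesis unfolding E_def by (simp add: exp_add[symmetric])
    qed
    then have "8 * (16 + E * Nr) \<le> 8 * (16 + exp (4 * q * \<alpha>) * exp (q * \<alpha> * (norm z)\<^sup>2) * Nr)"
      using NI by (intro mult_left_mono add_left_mono mult_right_mono) auto
    also have "\<dots> \<le> C * exp (q * \<alpha> * (norm z)\<^sup>2)"
    proof -
      define ez where "ez = exp (q * \<alpha> * (norm z)\<^sup>2)"
      have "1 \<le> ez" using q alpha unfolding ez_def by simp
      then have "128 \<le> 128 * ez" by simp
      moreover have "8 * (16 + exp (4 * q * \<alpha>) * ez * Nr) = 128 + 8 * Nr * exp (4 * q * \<alpha>) * ez"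
        by (simp add: algebra_simps)
      moreover have "C * ez = 128 * ez + 8 * Nr * exp (4 * q * \<alpha>) * ez"
        unfolding C_def by (simp add: algebra_simps)
      ultimately show ?thesis unfolding ez_def[symmetric] by linarith
    qed
    finally show ?thesis .
  qed
  then show ?thesis by blast
qed

lemma gauss_real:
  fixes c :: real assumes c: "0 < c"
  shows "(\<integral>\<^sup>+ x. ennreal (exp (- c * x\<^sup>2)) \<partial>lborel) < \<infinity>"
proof -
  define \<sigma> where "\<sigma> = sqrt (1 / (2 * c))"
  have sp: "0 < \<sigma>" using c by (simp add: \<sigma>_def)
  have s2: "\<sigma>\<^sup>2 = 1 / (2 * c)" using c by (simp add: \<sigma>_def)
  define K where "K = sqrt (pi / c)"
  have Kp: "0 < K" using c by (simp add: K_def)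
  have e1: "2 * pi * \<sigma>\<^sup>2 = pi / c" using c by (simp add: s2)
  have e2: "2 * \<sigma>\<^sup>2 = 1 / c" using c by (simp add: s2)
  have eq: "exp (- c * x\<^sup>2) = K * normal_density 0 \<sigma> x" for x
    using Kp c unfolding normal_density_def e1 e2 K_def by (simp add: field_simps)
  have "(\<integral>\<^sup>+ x. ennreal (exp (- c * x\<^sup>2)) \<partial>lborel) = (\<integral>\<^sup>+ x. ennreal K * ennreal (normal_density 0 \<sigma> x) \<partial>lborel)"
  proof (intro nn_integral_cong)
    fix x :: real
    show "ennreal (exp (- c * x\<^sup>2)) = ennreal K * ennreal (normal_density 0 \<sigma> x)"
      by (subst eq) (simp add: ennreal_mult Kp less_imp_le)
  qed
  also have "\<dots> = ennreal K * (\<integral>\<^sup>+ x. ennreal (normal_density 0 \<sigma> x) \<partial>lborel)"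
    by (rule nn_integral_cmult) simp
  also have "(\<integral>\<^sup>+ x. ennreal (normal_density 0 \<sigma> x) \<partial>lborel) = ennreal 1"
    using sp by (subst nn_integral_eq_integral) auto
  finally show ?thesis by simp
qed

lemma gauss_complex:
  fixes c :: real assumes c: "0 < c"
  shows "(\<integral>\<^sup>+ z. ennreal (exp (- c * (norm z)\<^sup>2)) \<partial>(lborel :: complex measure)) < \<infinity>"
proof -
  have "(\<integral>\<^sup>+ z. ennreal (exp (- c * (norm z)\<^sup>2)) \<partial>(lborel :: complex measure))
      = (\<integral>\<^sup>+ z. (\<Prod>b\<in>Basis. ennreal (exp (- c * (z \<bullet> b)\<^sup>2))) \<partial>(lborel :: complex measure))"
    by (intro nn_integral_cong) (simp add: Basis_complex_def cmod_power2 inner_complex_def ennreal_mult[symmetric] exp_add[symmetric] algebra_simps)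
  also have "\<dots> = (\<Prod>b\<in>(Basis::complex set). (\<integral>\<^sup>+ x. ennreal (exp (- c * x\<^sup>2)) \<partial>lborel))"
    by (rule nn_integral_lborel_prod[where f = "\<lambda>b x. ennreal (exp (- c * x\<^sup>2))"]) auto
  also have "\<dots> < \<infinity>"
    using gauss_real[OF c] by (simp add: Basis_complex_def ennreal_mult_less_top)
  finally show ?thesis .
qed

lemma dilation_bound:
  fixes f :: "complex \<Rightarrow> complex" and q \<alpha> :: real
  assumes f: "f holomorphic_on UNIV" and q: "1 \<le> q" and alpha: "0 < \<alpha>"
    and N: "(\<integral>\<^sup>+ z. ennreal ((norm (f z) * exp (- (\<alpha> / 2) * (norm z)\<^sup>2)) powr q) \<partial>lborel) < \<infinity>"
  shows "\<exists>K::ennreal. K < \<infinity> \<and> (\<forall>t\<ge>1. (\<integral>\<^sup>+ z. ennreal ((norm (f (z / of_real t)) * exp (- (\<alpha> / 2) * (norm z)\<^sup>2)) powr q) \<partial>lborel) \<le> K)"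
proof -
  define NI where "NI = (\<integral>\<^sup>+ z. ennreal ((norm (f z) * exp (- (\<alpha> / 2) * (norm z)\<^sup>2)) powr q) \<partial>lborel)"
  obtain C where C: "\<And>z. norm (f z) \<le> C * exp (q * \<alpha> * (norm z)\<^sup>2)"
    using growth[OF f q alpha N] by blast
  have C0: "0 \<le> C" using C[of 0] by (smt (verit) norm_ge_zero exp_gt_zero mult_nonneg_nonneg zero_le_mult_iff)
  define G where "G = (\<integral>\<^sup>+ z. ennreal (exp (- (q * \<alpha> / 4) * (norm z)\<^sup>2)) \<partial>(lborel :: complex measure))"
  have G: "G < \<infinity>" unfolding G_def using q alpha by (intro gauss_complex) auto
  have fm[measurable]: "f \<in> borel_measurable borel"
    using borel_measurable_continuous_onI holomorphic_on_imp_continuous_on[OF f] by blast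
  define K where "K = ennreal (4 * q) * NI + ennreal (C powr q) * G"
  have "K < \<infinity>" unfolding K_def using N G by (simp add: NI_def ennreal_mult_less_top)
  moreover have "(\<integral>\<^sup>+ z. ennreal ((norm (f (z / of_real t)) * exp (- (\<alpha> / 2) * (norm z)\<^sup>2)) powr q) \<partial>lborel) \<le> K"
    if t: "1 \<le> t" for t
  proof (cases "t\<^sup>2 \<le> 4 * q")
    case True
    have m: "(\<lambda>z. ennreal ((norm (f (z / of_real t)) * exp (- (\<alpha> / 2) * (norm z)\<^sup>2)) powr q)) \<in> borel_measurable borel"
      by measurable
    have "(\<integral>\<^sup>+ z. ennreal ((norm (f (z / of_real t)) * exp (- (\<alpha> / 2) * (norm z)\<^sup>2)) powr q) \<partial>lborel)
        = ennreal (t\<^sup>2) * (\<integral>\<^sup>+ x. ennreal ((norm (f ((0 + t *\<^sub>R x) / of_real t)) * exp (- (\<alpha> / 2) * (norm (0 + t *\<^sub>R x))\<^sup>2)) powr q) \<partial>lborel)"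
      using lborel_complex_affine[of t _ 0, OF _ m] t by simp
    also have "\<dots> \<le> ennreal (4 * q) * NI"
      unfolding NI_def
    proof (intro mult_mono nn_integral_mono)
      fix x :: complex
      have tx: "(0 + t *\<^sub>R x) / of_real t = x" using t by (simp add: scaleR_conv_of_real)
      have nx: "(norm (0 + t *\<^sub>R x))\<^sup>2 = t\<^sup>2 * (norm x)\<^sup>2" using t by (simp add: power_mult_distrib)
      have "(norm x)\<^sup>2 \<le> t\<^sup>2 * (norm x)\<^sup>2"
        using t by (simp add: mult_le_cancel_right1 power_mono[of 1 t 2, simplified])
      then have "exp (- (\<alpha> / 2) * (t\<^sup>2 * (norm x)\<^sup>2)) \<le> exp (- (\<alpha> / 2) * (norm x)\<^sup>2)"
        using alpha by simp
      then have "(norm (f x) * exp (- (\<alpha> / 2) * (t\<^sup>2 * (norm x)\<^sup>2))) powr q \<le> (norm (f x) * exp (- (\<alpha> / 2) * (norm x)\<^sup>2)) powr q"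
        using q by (intro powr_mono2 mult_left_mono) auto
      then show "ennreal ((norm (f ((0 + t *\<^sub>R x) / of_real t)) * exp (- (\<alpha> / 2) * (norm (0 + t *\<^sub>R x))\<^sup>2)) powr q)
          \<le> ennreal ((norm (f x) * exp (- (\<alpha> / 2) * (norm x)\<^sup>2)) powr q)"
        unfolding tx nx by (rule ennreal_leI)
    qed (use True in \<open>auto intro: ennreal_leI\<close>)
    also have "\<dots> \<le> K" unfolding K_def by simp
    finally show ?thesis .
  next
    case False
    have "(\<integral>\<^sup>+ z. ennreal ((norm (f (z / of_real t)) * exp (- (\<alpha> / 2) * (norm z)\<^sup>2)) powr q) \<partial>lborel)
        \<le> (\<integral>\<^sup>+ z. ennreal (C powr q) * ennreal (exp (- (q * \<alpha> / 4) * (norm z)\<^sup>2)) \<partial>(lborel :: complex measure))"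
    proof (intro nn_integral_mono)
      fix z :: complex
      have tp: "0 < t" using t by simp
      have "q * \<alpha> * (norm (z / of_real t))\<^sup>2 = (q / t\<^sup>2) * \<alpha> * (norm z)\<^sup>2"
        using tp by (simp add: norm_divide power_divide)
      also have "\<dots> \<le> (1/4) * \<alpha> * (norm z)\<^sup>2"
      proof -
        have "q / t\<^sup>2 \<le> 1/4" using False tp by (simp add: divide_simps)
        then show ?thesis using alpha by (intro mult_right_mono) auto
      qed
      finally have e: "q * \<alpha> * (norm (z / of_real t))\<^sup>2 \<le> (1/4) * \<alpha> * (norm z)\<^sup>2" .
      have "norm (f (z / of_real t)) * exp (- (\<alpha> / 2) * (norm z)\<^sup>2)
          \<le> C * exp (q * \<alpha> * (norm (z / of_real t))\<^sup>2) * exp (- (\<alpha> / 2) * (norm z)\<^sup>2)"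
        by (intro mult_right_mono C) auto
      also have "\<dots> = C * exp (q * \<alpha> * (norm (z / of_real t))\<^sup>2 + (- (\<alpha> / 2) * (norm z)\<^sup>2))"
        by (simp only: exp_add mult.assoc)
      also have "\<dots> \<le> C * exp (- (\<alpha> / 4) * (norm z)\<^sup>2)"
        using e C0 by (intro mult_left_mono) auto
      finally have "(norm (f (z / of_real t)) * exp (- (\<alpha> / 2) * (norm z)\<^sup>2)) powr q \<le> (C * exp (- (\<alpha> / 4) * (norm z)\<^sup>2)) powr q"
        using q by (intro powr_mono2) auto
      also have "\<dots> = C powr q * exp (- (q * \<alpha> / 4) * (norm z)\<^sup>2)"
      proof -
        have "(C * exp (- (\<alpha> / 4) * (norm z)\<^sup>2)) powr q = C powr q * exp (- (\<alpha> / 4) * (norm z)\<^sup>2) powr q"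
          using C0 by (simp add: powr_mult)
        also have "exp (- (\<alpha> / 4) * (norm z)\<^sup>2) powr q = exp (q * (- (\<alpha> / 4) * (norm z)\<^sup>2))"
          by (simp add: powr_def)
        finally show ?thesis by (simp add: algebra_simps)
      qed
      finally show "ennreal ((norm (f (z / of_real t)) * exp (- (\<alpha> / 2) * (norm z)\<^sup>2)) powr q)
          \<le> ennreal (C powr q) * ennreal (exp (- (q * \<alpha> / 4) * (norm z)\<^sup>2))"
        by (simp add: ennreal_mult[symmetric] ennreal_leI)
    qed
    also have "\<dots> = ennreal (C powr q) * G"
      unfolding G_def by (rule nn_integral_cmult) measurable
    also have "\<dots> \<le> K" unfolding K_def by simp
    finally show ?thesis .
  qed
  ultimately show ?thesis by blast
qed

lemma young_norm:
  fixes v q :: real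
  assumes "0 \<le> v" "1 \<le> q"
  shows "v \<le> (1/q) * v powr q + (1 - 1/q)"
proof (cases "v = 0")
  case True then show ?thesis using assms by simp
next
  case False
  then have v: "0 < v" using assms by simp
  have "(v powr q) powr (1/q) * 1 powr (1 - 1/q) \<le> (1/q) * v powr q + (1 - 1/q) * 1"
    using assms v by (intro Youngs_inequality_0) (auto simp: divide_simps)
  moreover have "(v powr q) powr (1/q) = v" using assms v by (simp add: powr_powr)
  ultimately show ?thesis by simp
qed

lemma holder_fin:
  fixes \<nu> :: "'a measure" and u :: "'a \<Rightarrow> real" and q :: real
  assumes fin: "finite_measure \<nu>" and um[measurable]: "u \<in> borel_measurable \<nu>"
    and u0: "\<And>x. 0 \<le> u x" and q: "1 \<le> q"
  shows "ennreal ((enn2real (\<integral>\<^sup>+ x. ennreal (u x) \<partial>\<nu>)) powr q)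
     \<le> ennreal (measure \<nu> (space \<nu>) powr (q - 1)) * (\<integral>\<^sup>+ x. ennreal (u x powr q) \<partial>\<nu>)"
proof -
  interpret finite_measure \<nu> by (rule fin)
  define M where "M = measure \<nu> (space \<nu>)"
  define J where "J = (\<integral>\<^sup>+ x. ennreal (u x powr q) \<partial>\<nu>)"
  define I where "I = (\<integral>\<^sup>+ x. ennreal (u x) \<partial>\<nu>)"
  have M0: "0 \<le> M" by (simp add: M_def)
  have eM: "emeasure \<nu> (space \<nu>) = ennreal M" by (simp add: M_def emeasure_eq_measure)
  show ?thesis
  proof (cases "M = 0")
    case True
    then have "AE x in \<nu>. False"
      using eM by (intro AE_I'[of "space \<nu>"]) (auto simp: null_sets_def)
    then have "AE x in \<nu>. ennreal (u x) = 0" by eventually_elim simp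
    then have "I = 0" unfolding I_def by (simp add: nn_integral_0_iff_AE)
    then show ?thesis using q by (simp add: I_def)
  next
    case False
    then have Mp: "0 < M" using M0 by simp
    show ?thesis
    proof (cases "J = \<infinity>")
      case True
      then show ?thesis using Mp by (simp add: J_def M_def ennreal_mult_top)
    next
      case False
      define Jr where "Jr = enn2real J"
      have JJ: "J = ennreal Jr" "0 \<le> Jr" using False by (auto simp: Jr_def less_top ennreal_enn2real_if)
      show ?thesis
      proof (cases "Jr = 0")
        case True
        then have "AE x in \<nu>. ennreal (u x powr q) = 0"
          using JJ unfolding J_def by (subst nn_integral_0_iff_AE[symmetric]) auto
        then have "AE x in \<nu>. ennreal (u x) = 0"
          by eventually_elim (use u0 in simp)
        then have "I = 0" unfolding I_def by (simp add: nn_integral_0_iff_AE)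
        then show ?thesis using q by (simp add: I_def)
      next
        case False
        then have Jp: "0 < Jr" using JJ by simp
        define lam where "lam = (Jr / M) powr (1/q)"
        have lp: "0 < lam" using Jp Mp by (simp add: lam_def)
        have lq: "lam powr q = Jr / M" using Jp Mp q by (simp add: lam_def powr_powr)
        define A where "A = lam / q / lam powr q"
        define B where "B = (1 - 1/q) * lam"
        have A0: "0 \<le> A" "0 \<le> B" using lp q by (auto simp: A_def B_def divide_simps)
        have pt: "u x \<le> A * u x powr q + B" for x
        proof -
          have "u x / lam \<le> (1/q) * (u x / lam) powr q + (1 - 1/q)"
            using u0[of x] lp q by (intro young_norm) auto
          also have "(u x / lam) powr q = u x powr q / lam powr q"
            using u0[of x] lp by (simp add: powr_divide)
          finally have "u x / lam \<le> (1/q) * (u x powr q / lam powr q) + (1 - 1/q)" .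
          then have "lam * (u x / lam) \<le> lam * ((1/q) * (u x powr q / lam powr q) + (1 - 1/q))"
            using lp by (intro mult_left_mono) auto
          then show ?thesis using lp by (simp add: A_def B_def algebra_simps)
        qed
        have "I \<le> (\<integral>\<^sup>+ x. ennreal A * ennreal (u x powr q) + ennreal B \<partial>\<nu>)"
          unfolding I_def
        proof (intro nn_integral_mono)
          fix x
          have "ennreal (u x) \<le> ennreal (A * u x powr q + B)" using pt by (rule ennreal_leI)
          also have "\<dots> = ennreal A * ennreal (u x powr q) + ennreal B"
            using A0 by (simp add: ennreal_plus ennreal_mult)
          finally show "ennreal (u x) \<le> ennreal A * ennreal (u x powr q) + ennreal B" .
        qed
        also have "\<dots> = ennreal A * J + ennreal B * emeasure \<nu> (space \<nu>)"
          unfolding J_def by (subst nn_integral_add) (auto simp: nn_integral_cmult)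
        also have "\<dots> = ennreal (A * Jr + B * M)"
          using A0 JJ M0 eM by (simp add: ennreal_plus ennreal_mult)
        also have "A * Jr + B * M = lam * M"
          using lp Mp q Jp unfolding A_def B_def lq by (simp add: field_simps)
        finally have IM: "I \<le> ennreal (lam * M)" .
        then have Ir: "enn2real I \<le> lam * M"
          using lp Mp by (metis enn2real_ennreal enn2real_mono ennreal_less_top less_eq_real_def mult_pos_pos)
        have "enn2real I powr q \<le> (lam * M) powr q"
          using Ir q by (intro powr_mono2) auto
        also have "\<dots> = lam powr q * M powr q" using lp Mp by (simp add: powr_mult)
        also have "M powr q = M powr (q - 1) * M" using powr_add[of M "q - 1" 1] Mp by simp
        also have "lam powr q * (M powr (q - 1) * M) = M powr (q - 1) * Jr"
          using Mp by (simp add: lq)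
        finally have "enn2real I powr q \<le> M powr (q - 1) * Jr" .
        then have "ennreal (enn2real I powr q) \<le> ennreal (M powr (q - 1) * Jr)" by (rule ennreal_leI)
        also have "\<dots> = ennreal (M powr (q - 1)) * J" using JJ by (simp add: ennreal_mult)
        finally show ?thesis by (simp add: I_def J_def M_def)
      qed
    qed
  qed
qed

lemma core_rep:
  fixes \<nu> :: "real measure" and f :: "complex \<Rightarrow> complex" and a :: "nat \<Rightarrow> complex" and m :: "nat \<Rightarrow> real"
  assumes fin: "finite_measure \<nu>" and sets_nu: "sets \<nu> = sets borel"
    and fh: "f holomorphic_on UNIV"
    and a: "\<And>z. (\<lambda>n. a n * z^n) sums f z"
    and mom: "\<And>n. m n = (\<integral> t. indicator {1..} t * (1/t)^n \<partial>\<nu>)"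
  defines "g \<equiv> \<lambda>z. \<integral> t. indicator {1..} t *\<^sub>R f (z / of_real t) \<partial>\<nu>"
  shows "\<And>z. (\<lambda>n. complex_of_real (m n) * a n * z^n) sums g z"
    and "g holomorphic_on UNIV"
    and "\<And>z. integrable \<nu> (\<lambda>t. indicator {1..} t * norm (f (z / of_real t)))"
    and "\<And>z. norm (g z) \<le> (\<integral> t. indicator {1..} t * norm (f (z / of_real t)) \<partial>\<nu>)"
proof -
  interpret finite_measure \<nu> by (rule fin)
  note sets_nu[measurable_cong]
  have fm[measurable]: "f \<in> borel_measurable borel"
    using borel_measurable_continuous_onI holomorphic_on_imp_continuous_on[OF fh] by blast
  have absS: "summable (\<lambda>n. norm (a n * z^n))" for z
  proof -
    have "summable (\<lambda>n. a n * (of_real (norm z + 1)) ^ n)"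
      using a[of "of_real (norm z + 1)"] by (simp add: sums_iff)
    moreover have "norm z < norm (complex_of_real (norm z + 1))"
      by (simp add: abs_of_nonneg)
    ultimately show ?thesis by (rule powser_insidea)
  qed
  define F where "F z n t = (a n * z^n) * complex_of_real (indicator {1..} t * (1/t)^n)" for z n and t :: real
  have ile: "norm (complex_of_real (indicator {1..} t * (1/t)^n)) \<le> 1" for t :: real and n
  proof (cases "1 \<le> t")
    case True
    then have "(1/t)^n \<le> 1" by (intro power_le_one) auto
    moreover have "0 \<le> (1/t)^n" using True by simp
    ultimately show ?thesis using True by (simp only: norm_of_real) (simp add: abs_of_nonneg)
  qed (simp only: norm_of_real, simp)
  have Fle: "norm (F z n t) \<le> norm (a n * z^n)" for z n t
    unfolding F_def norm_mult[of "a n * z^n"] by (intro mult_left_le ile) auto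
  have Fm[measurable]: "F z n \<in> borel_measurable \<nu>" for z n
    unfolding F_def by measurable
  have Fint: "integrable \<nu> (F z n)" for z n
    by (rule integrable_const_bound[where B = "norm (a n * z^n)"]) (auto simp: Fle)
  have Fsum_pt: "summable (\<lambda>n. norm (F z n t))" for z t
    by (rule summable_comparison_test'[OF absS[of z], of 0]) (simp add: Fle)
  have Fsum_int: "summable (\<lambda>n. \<integral> t. norm (F z n t) \<partial>\<nu>)" for z
  proof (rule summable_comparison_test'[of "\<lambda>n. norm (a n * z^n) * measure \<nu> (space \<nu>)" 0])
    show "summable (\<lambda>n. norm (a n * z^n) * measure \<nu> (space \<nu>))"
      by (rule summable_mult2[OF absS])
    fix n :: nat
    have "(\<integral> t. norm (F z n t) \<partial>\<nu>) \<le> (\<integral> t. norm (a n * z^n) \<partial>\<nu>)"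
      by (intro integral_mono integrable_norm Fint) (auto simp: Fle)
    also have "\<dots> = norm (a n * z^n) * measure \<nu> (space \<nu>)" by simp
    finally show "norm (\<integral> t. norm (F z n t) \<partial>\<nu>) \<le> norm (a n * z^n) * measure \<nu> (space \<nu>)"
      by (simp add: integral_nonneg_AE)
  qed
  have Fsum: "(\<Sum>n. F z n t) = indicator {1..} t *\<^sub>R f (z / of_real t)" for z t
  proof (cases "1 \<le> t")
    case True
    have "F z n t = a n * (z / of_real t) ^ n" for n
      using True by (simp add: F_def power_divide divide_inverse of_real_power power_inverse power_mult_distrib)
    then have "(\<Sum>n. F z n t) = f (z / of_real t)"
      using sums_unique[OF a[of "z / of_real t"]] by simp
    then show ?thesis using True by simp
  qed (simp add: F_def)
  have Fint_val: "(\<integral> t. F z n t \<partial>\<nu>) = complex_of_real (m n) * a n * z^n" for z n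
    unfolding F_def integral_mult_right_zero integral_complex_of_real mom[symmetric] by (simp add: mult_ac)
  have AEs: "AE t in \<nu>. summable (\<lambda>n. norm (F z n t))" for z
    using Fsum_pt by simp
  show sums_g: "(\<lambda>n. complex_of_real (m n) * a n * z^n) sums g z" for z
    using sums_integral[OF Fint AEs Fsum_int] unfolding Fint_val Fsum g_def .
  have gint: "integrable \<nu> (\<lambda>t. indicator {1..} t *\<^sub>R f (z / of_real t))" for z
    using integrable_suminf[OF Fint AEs Fsum_int] unfolding Fsum .
  have nrm: "norm (indicator {1..} t *\<^sub>R f (z / of_real t)) = indicator {1..} t * norm (f (z / of_real t))" for z t
    by (simp add: indicator_def)
  show "integrable \<nu> (\<lambda>t. indicator {1..} t * norm (f (z / of_real t)))" for z
    using integrable_norm[OF gint[of z]] unfolding nrm .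
  show "norm (g z) \<le> (\<integral> t. indicator {1..} t * norm (f (z / of_real t)) \<partial>\<nu>)" for z
    using integral_norm_bound[of \<nu> "\<lambda>t. indicator {1..} t *\<^sub>R f (z / of_real t)"] unfolding nrm g_def .
  have summ: "summable (\<lambda>n. (complex_of_real (m n) * a n) * y^n)" for y
    using sums_g[of y] by (simp add: sums_iff)
  have geq: "g = (\<lambda>x. \<Sum>n. (complex_of_real (m n) * a n) * x^n)"
    using sums_g by (intro ext) (simp add: sums_iff)
  show "g holomorphic_on UNIV"
    unfolding geq holomorphic_on_def field_differentiable_def
    using termdiffs_strong_converges_everywhere[OF summ] by auto
qed

lemma core_fock:
  fixes \<nu> :: "real measure" and f g :: "complex \<Rightarrow> complex" and p :: ennreal and \<alpha> :: real
  assumes fin: "finite_measure \<nu>" and sets_nu: "sets \<nu> = sets borel"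
    and f: "f \<in> Fock_space p \<alpha>" and p: "1 \<le> p" and alpha: "0 < \<alpha>"
    and gh: "g holomorphic_on UNIV"
    and gint: "\<And>z. integrable \<nu> (\<lambda>t. indicator {1..} t * norm (f (z / of_real t)))"
    and gb: "\<And>z. norm (g z) \<le> (\<integral> t. indicator {1..} t * norm (f (z / of_real t)) \<partial>\<nu>)"
  shows "g \<in> Fock_space p \<alpha>"
proof -
  interpret finite_measure \<nu> by (rule fin)
  note sets_nu[measurable_cong]
  have fh: "f holomorphic_on UNIV" using f by (simp add: Fock_space_def)
  have fm[measurable]: "f \<in> borel_measurable borel"
    using borel_measurable_continuous_onI holomorphic_on_imp_continuous_on[OF fh] by blast
  define Mt where "Mt = measure \<nu> (space \<nu>)"
  have Mt0: "0 \<le> Mt" by (simp add: Mt_def)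
  define Ir where "Ir z = (\<integral> t. indicator {1..} t * norm (f (z / of_real t)) \<partial>\<nu>)" for z
  have Ir0: "0 \<le> Ir z" for z unfolding Ir_def by (intro integral_nonneg_AE) auto
  show ?thesis
  proof (cases "p = \<infinity>")
    case True
    then obtain Cf where Cf: "\<And>z. norm (f z) * exp (- (\<alpha> / 2) * (norm z)\<^sup>2) \<le> Cf"
      using f by (auto simp: Fock_space_def)
    have Cf0: "0 \<le> Cf" using Cf[of 0] by (smt (verit) norm_ge_zero exp_gt_zero mult_nonneg_nonneg)
    have fb: "norm (f u) \<le> Cf * exp ((\<alpha> / 2) * (norm u)\<^sup>2)" for u
    proof -
      have "norm (f u) = (norm (f u) * exp (- (\<alpha> / 2) * (norm u)\<^sup>2)) * exp ((\<alpha> / 2) * (norm u)\<^sup>2)"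
        by (simp add: mult.assoc exp_minus field_simps)
      also have "\<dots> \<le> Cf * exp ((\<alpha> / 2) * (norm u)\<^sup>2)"
        by (intro mult_right_mono Cf) auto
      finally show ?thesis .
    qed
    have "norm (g z) * exp (- (\<alpha> / 2) * (norm z)\<^sup>2) \<le> Mt * Cf" for z
    proof -
      have "Ir z \<le> (\<integral> t. Cf * exp ((\<alpha> / 2) * (norm z)\<^sup>2) \<partial>\<nu>)"
        unfolding Ir_def
      proof (intro integral_mono gint)
        fix t :: real
        show "indicator {1..} t * norm (f (z / of_real t)) \<le> Cf * exp ((\<alpha> / 2) * (norm z)\<^sup>2)"
        proof (cases "1 \<le> t")
          case True
          have "norm (z / of_real t) \<le> norm z"
            using True by (simp add: norm_divide divide_le_eq mult_le_cancel_left1)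
          then have "(norm (z / of_real t))\<^sup>2 \<le> (norm z)\<^sup>2" by (intro power_mono) auto
          then have "exp ((\<alpha> / 2) * (norm (z / of_real t))\<^sup>2) \<le> exp ((\<alpha> / 2) * (norm z)\<^sup>2)"
            using alpha by simp
          then have "Cf * exp ((\<alpha> / 2) * (norm (z / of_real t))\<^sup>2) \<le> Cf * exp ((\<alpha> / 2) * (norm z)\<^sup>2)"
            using Cf0 by (rule mult_left_mono)
          then show ?thesis using True fb[of "z / of_real t"] by simp
        next
          case False then show ?thesis using Cf0 by simp
        qed
      qed simp
      also have "\<dots> = Mt * (Cf * exp ((\<alpha> / 2) * (norm z)\<^sup>2))" by (simp add: Mt_def)
      finally have "norm (g z) \<le> Mt * (Cf * exp ((\<alpha> / 2) * (norm z)\<^sup>2))"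
        using gb[of z] unfolding Ir_def by linarith
      then have "norm (g z) * exp (- (\<alpha> / 2) * (norm z)\<^sup>2) \<le> Mt * (Cf * exp ((\<alpha> / 2) * (norm z)\<^sup>2)) * exp (- (\<alpha> / 2) * (norm z)\<^sup>2)"
        by (rule mult_right_mono) simp
      also have "\<dots> = Mt * Cf" by (simp add: exp_minus field_simps)
      finally show ?thesis .
    qed
    then show ?thesis using gh True by (auto simp: Fock_space_def)
  next
    case False
    define q where "q = enn2real p"
    have q: "1 \<le> q" using enn2real_mono[OF p] False by (simp add: q_def less_top)
    have N: "(\<integral>\<^sup>+ z. ennreal ((norm (f z) * exp (- (\<alpha> / 2) * (norm z)\<^sup>2)) powr q) \<partial>lborel) < \<infinity>"
      using f False by (simp add: Fock_space_def q_def)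
    obtain K where K: "K < \<infinity>"
      and Kb: "\<And>t. 1 \<le> t \<Longrightarrow> (\<integral>\<^sup>+ z. ennreal ((norm (f (z / of_real t)) * exp (- (\<alpha> / 2) * (norm z)\<^sup>2)) powr q) \<partial>lborel) \<le> K"
      using dilation_bound[OF fh q alpha N] by blast
    define c where "c = ennreal (Mt powr (q - 1))"
    define U where "U z t = (indicator {1..} t * norm (f (z / of_real t)) * exp (- (\<alpha> / 2) * (norm z)\<^sup>2))" for z and t :: real
    have Um[measurable]: "(\<lambda>(z, t). c * ennreal (U z t powr q)) \<in> borel_measurable (lborel \<Otimes>\<^sub>M \<nu>)"
      unfolding U_def by measurable
    have pw: "ennreal ((norm (g z) * exp (- (\<alpha> / 2) * (norm z)\<^sup>2)) powr q) \<le> (\<integral>\<^sup>+ t. c * ennreal (U z t powr q) \<partial>\<nu>)" for z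
    proof -
      define w where "w = exp (- (\<alpha> / 2) * (norm z)\<^sup>2)"
      have w0: "0 \<le> w" by (simp add: w_def)
      have "(\<integral>\<^sup>+ t. ennreal (U z t) \<partial>\<nu>) = (\<integral>\<^sup>+ t. ennreal (indicator {1..} t * norm (f (z / of_real t))) * ennreal w \<partial>\<nu>)"
        by (intro nn_integral_cong) (simp add: U_def w_def ennreal_mult[symmetric])
      also have "\<dots> = (\<integral>\<^sup>+ t. ennreal (indicator {1..} t * norm (f (z / of_real t))) \<partial>\<nu>) * ennreal w"
        by (rule nn_integral_multc) measurable
      also have "(\<integral>\<^sup>+ t. ennreal (indicator {1..} t * norm (f (z / of_real t))) \<partial>\<nu>) = ennreal (Ir z)"
        unfolding Ir_def by (rule nn_integral_eq_integral[OF gint]) auto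
      finally have eqI: "(\<integral>\<^sup>+ t. ennreal (U z t) \<partial>\<nu>) = ennreal (Ir z * w)"
        using Ir0 w0 by (simp add: ennreal_mult)
      have "norm (g z) * w \<le> Ir z * w" using gb[of z] w0 unfolding Ir_def by (rule mult_right_mono)
      then have "(norm (g z) * w) powr q \<le> (Ir z * w) powr q" using q w0 by (intro powr_mono2) auto
      then have "ennreal ((norm (g z) * w) powr q) \<le> ennreal ((enn2real (\<integral>\<^sup>+ t. ennreal (U z t) \<partial>\<nu>)) powr q)"
        using Ir0 w0 unfolding eqI by (simp add: ennreal_leI)
      also have "\<dots> \<le> c * (\<integral>\<^sup>+ t. ennreal (U z t powr q) \<partial>\<nu>)"
        unfolding c_def Mt_def using q
        by (intro holder_fin[OF fin]) (auto simp: U_def)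
      also have "\<dots> = (\<integral>\<^sup>+ t. c * ennreal (U z t powr q) \<partial>\<nu>)"
        by (rule nn_integral_cmult[symmetric]) (unfold U_def, measurable)
      finally show ?thesis unfolding w_def .
    qed
    have ps: "pair_sigma_finite lborel \<nu>"
      using fin by (auto simp: pair_sigma_finite_def finite_measure_def sigma_finite_lborel)
    have inner: "(\<integral>\<^sup>+ z. c * ennreal (U z t powr q) \<partial>lborel) \<le> c * K" for t
    proof -
      have "(\<integral>\<^sup>+ z. c * ennreal (U z t powr q) \<partial>lborel) = c * (\<integral>\<^sup>+ z. ennreal (U z t powr q) \<partial>lborel)"
        by (rule nn_integral_cmult) (unfold U_def, measurable)
      also have "(\<integral>\<^sup>+ z. ennreal (U z t powr q) \<partial>lborel) \<le> K"
      proof (cases "1 \<le> t")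
        case True
        then show ?thesis using Kb[OF True] by (simp add: U_def)
      next
        case False
        then show ?thesis by (simp add: U_def)
      qed
      then have "c * (\<integral>\<^sup>+ z. ennreal (U z t powr q) \<partial>lborel) \<le> c * K" by (rule mult_left_mono) simp
      finally show ?thesis .
    qed
    have "(\<integral>\<^sup>+ z. ennreal ((norm (g z) * exp (- (\<alpha> / 2) * (norm z)\<^sup>2)) powr q) \<partial>lborel)
        \<le> (\<integral>\<^sup>+ z. (\<integral>\<^sup>+ t. c * ennreal (U z t powr q) \<partial>\<nu>) \<partial>lborel)"
      by (intro nn_integral_mono pw)
    also have "\<dots> = (\<integral>\<^sup>+ t. (\<integral>\<^sup>+ z. c * ennreal (U z t powr q) \<partial>lborel) \<partial>\<nu>)"
      using pair_sigma_finite.Fubini'[OF ps Um] by simp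
    also have "\<dots> \<le> (\<integral>\<^sup>+ t. c * K \<partial>\<nu>)"
      by (intro nn_integral_mono inner)
    also have "\<dots> = c * K * emeasure \<nu> (space \<nu>)" by simp
    also have "\<dots> < \<infinity>" using K by (simp add: c_def ennreal_mult_less_top emeasure_eq_measure)
    finally show ?thesis using gh False by (simp add: Fock_space_def q_def)
  qed
qed

theorem mainTheorem2:
  fixes \<mu> :: "real measure" and p :: ennreal and \<alpha> :: real
    and f :: "complex \<Rightarrow> complex" and a :: "nat \<Rightarrow> complex"
  assumes space_mu: "space \<mu> = {0<..}"
    and sets_mu: "sets \<mu> = sets (restrict_space borel {0<..})"
    and null01: "emeasure \<mu> {0<..<1} = 0"
    and bounded: "(SUP n. \<integral>\<^sup>+ t. ennreal (t powr (- real (n + 1))) * indicator {1..} t \<partial>\<mu>) < \<infinity>"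
    and p: "1 \<le> p"
    and alpha: "\<alpha> > 0"
    and f: "f \<in> Fock_space p \<alpha>"
    and a: "\<And>z. (\<lambda>n. a n * z ^ n) sums f z"
  shows "\<exists>g \<in> Fock_space p \<alpha>. \<forall>z. (\<lambda>n. complex_of_real (moment_seq \<mu> n) * a n * z ^ n) sums g z"
proof -
  have mmu: "measurable \<mu> borel = measurable (restrict_space borel {0<..}) borel"
    by (rule measurable_cong_sets[OF sets_mu refl])
  have idm: "(\<lambda>t. t) \<in> measurable \<mu> borel"
    unfolding mmu by (intro measurable_restrict_space1) simp
  define \<nu>0 where "\<nu>0 = distr \<mu> borel (\<lambda>t. t)"
  define d where "d t = ennreal (1/t) * indicator {1..} t" for t :: real
  define \<nu> where "\<nu> = density \<nu>0 d"
  have sets_nu0[measurable_cong]: "sets \<nu>0 = sets borel" by (simp add: \<nu>0_def)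
  have sets_nu: "sets \<nu> = sets borel" by (simp add: \<nu>_def \<nu>0_def)
  have dm[measurable]: "d \<in> borel_measurable borel" unfolding d_def by measurable
  have nnv: "integral\<^sup>N \<nu> h = (\<integral>\<^sup>+ t. d t * h t \<partial>\<mu>)" if hm: "h \<in> borel_measurable borel" for h
  proof -
    have "integral\<^sup>N \<nu> h = (\<integral>\<^sup>+ t. d t * h t \<partial>\<nu>0)"
      unfolding \<nu>_def using hm by (intro nn_integral_density) auto
    also have "\<dots> = (\<integral>\<^sup>+ t. d t * h t \<partial>\<mu>)"
      unfolding \<nu>0_def using hm by (subst nn_integral_distr[OF idm]) auto
    finally show ?thesis .
  qed
  have eqpt: "d t * ennreal (indicator {1..} t * (1/t)^n) = ennreal (t powr (- real (n + 1))) * indicator {1..} t"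
    if "t \<in> space \<mu>" for t n
  proof -
    have tp: "0 < t" using that space_mu by simp
    have pw: "t powr (- real (n + 1)) = (1/t) ^ (n + 1)"
      by (simp only: powr_minus powr_realpow[OF tp]) (simp add: power_one_over inverse_eq_divide)
    show ?thesis
    proof (cases "1 \<le> t")
      case True
      then show ?thesis using tp unfolding d_def pw
        by (simp add: ennreal_mult[symmetric] mult.commute)
    qed (simp add: d_def)
  qed
  have fin: "finite_measure \<nu>"
  proof (rule finite_measureI)
    have "emeasure \<nu> (space \<nu>) = (\<integral>\<^sup>+ t. 1 \<partial>\<nu>)" by simp
    also have "\<dots> = (\<integral>\<^sup>+ t. d t * 1 \<partial>\<mu>)" by (rule nnv) simp
    also have "\<dots> = (\<integral>\<^sup>+ t. ennreal (t powr (- real (0 + 1))) * indicator {1..} t \<partial>\<mu>)"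
    proof (intro nn_integral_cong)
      fix t assume "t \<in> space \<mu>"
      from eqpt[OF this, of 0] show "d t * 1 = ennreal (t powr (- real (0 + 1))) * indicator {1..} t"
        by (simp add: d_def split: split_indicator)
    qed
    also have "\<dots> \<le> (SUP n. \<integral>\<^sup>+ t. ennreal (t powr (- real (n + 1))) * indicator {1..} t \<partial>\<mu>)"
      by (rule SUP_upper) simp
    finally show "emeasure \<nu> (space \<nu>) \<noteq> \<infinity>" using bounded by (auto simp: top_unique)
  qed
  have mom: "moment_seq \<mu> n = (\<integral> t. indicator {1..} t * (1/t)^n \<partial>\<nu>)" for n
  proof -
    have "(\<integral> t. indicator {1..} t * (1/t)^n \<partial>\<nu>) = enn2real (\<integral>\<^sup>+ t. ennreal (indicator {1..} t * (1/t)^n) \<partial>\<nu>)"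
      by (rule integral_eq_nn_integral) (auto simp: sets_nu measurable_cong_sets[OF sets_nu refl] split: split_indicator)
    also have "(\<integral>\<^sup>+ t. ennreal (indicator {1..} t * (1/t)^n) \<partial>\<nu>) = (\<integral>\<^sup>+ t. d t * ennreal (indicator {1..} t * (1/t)^n) \<partial>\<mu>)"
      by (rule nnv) measurable
    also have "\<dots> = (\<integral>\<^sup>+ t. ennreal (t powr (- real (n + 1))) * indicator {1..} t \<partial>\<mu>)"
      by (intro nn_integral_cong eqpt)
    finally show ?thesis by (simp add: moment_seq_def)
  qed
  have fh: "f holomorphic_on UNIV" using f by (simp add: Fock_space_def)
  define g where "g = (\<lambda>z. \<integral> t. indicator {1..} t *\<^sub>R f (z / of_real t) \<partial>\<nu>)"
  note R = core_rep[OF fin sets_nu fh a mom, folded g_def]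
  have "g \<in> Fock_space p \<alpha>"
    by (rule core_fock[OF fin sets_nu f p alpha R(2) R(3)]) (use R(4) in \<open>simp add: g_def\<close>)
  moreover have "\<forall>z. (\<lambda>n. complex_of_real (moment_seq \<mu> n) * a n * z ^ n) sums g z"
    using R(1) by (simp add: g_def)
  ultimately show ?thesis by blast
qed

end
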